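(* Let $\mathcal{H}$ be a separable Hilbert space, $\{\mathcal{H}_j\}_{j\in J}$ ($J\subseteq\mathbb{Z}$) a sequence of closed subspaces of $\mathcal{H}$, $K\in\mathcal{B}(\mathcal{H})$, and $\Lambda_j\in\mathcal{B}(\mathcal{H},\mathcal{H}_j)$ for each $j\in J$. For each $j\in J$ let $\{\mathcal{H}_{ij}\}_{i\in I_j}$ be a sequence of closed subspaces of $\mathcal{H}_j$, and let $\{\Gamma_{ij}\in\mathcal{B}(\mathcal{H}_j,\mathcal{H}_{ij})\}_{i\in I_j}$ be a $g$-frame for $\mathcal{H}_j$ with bounds $C_j,D_j$, such that $0<C=\inf_{j\in J}C_j\leq\sup_{j\in J}D_j=D<\infty$. Then the following are equivalent: (i) $\{\Lambda_j\}_{j\in J}$ is a $K$-$g$-frame for $\mathcal{H}$; (ii) $\{\Gamma_{ij}\Lambda_j\in\mathcal{B}(\mathcal{H},\mathcal{H}_{ij}): i\in I_j, j\in J\}$ is a $K$-$g$-frame for $\mathcal{H}$.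
   Context: A family $\{\Lambda_j\in\mathcal{B}(\mathcal{H},\mathcal{V}_j)\}_{j}$ is a $K$-$g$-frame for $\mathcal{H}$ (with respect to the spaces $\mathcal{V}_j$) if there exist $0<A\leq B<\infty$ with $A\|K^{\ast}f\|^2\leq\sum_{j}\|\Lambda_jf\|^2\leq B\|f\|^2$ for all $f\in\mathcal{H}$. A family $\{\Gamma_i\in\mathcal{B}(\mathcal{W},\mathcal{W}_i)\}_i$ is a $g$-frame for a Hilbert space $\mathcal{W}$ with bounds $C,D$ ($0<C\leq D<\infty$) if $C\|g\|^2\leq\sum_i\|\Gamma_ig\|^2\leq D\|g\|^2$ for all $g\in\mathcal{W}$. *)

theory Defs
  imports "HOL-Analysis.Analysis"
begin

definition closed_subspace :: "'a::real_normed_vector set \<Rightarrow> bool" where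
  "closed_subspace S \<longleftrightarrow> subspace S \<and> closed S"

definition bounded_linear_on :: "'a::real_normed_vector set \<Rightarrow> ('a \<Rightarrow> 'b::real_normed_vector) \<Rightarrow> bool" where
  "bounded_linear_on S f \<longleftrightarrow>
     (\<forall>x\<in>S. \<forall>y\<in>S. f (x + y) = f x + f y) \<and>
     (\<forall>c. \<forall>x\<in>S. f (c *\<^sub>R x) = c *\<^sub>R f x) \<and>
     (\<exists>M. \<forall>x\<in>S. norm (f x) \<le> M * norm x)"

definition K_g_frame ::
  "('a::{real_inner,complete_space} \<Rightarrow> 'a) \<Rightarrow> ('i \<Rightarrow> 'a \<Rightarrow> 'a) \<Rightarrow> 'i set \<Rightarrow> bool" where
  "K_g_frame K L J \<longleftrightarrow>
     (\<exists>A B. 0 < A \<and> A \<le> B \<and>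
        (\<forall>f. (\<lambda>j. (norm (L j f))\<^sup>2) summable_on J \<and>
             A * (norm (adjoint K f))\<^sup>2 \<le> (\<Sum>\<^sub>\<infinity>j\<in>J. (norm (L j f))\<^sup>2) \<and>
             (\<Sum>\<^sub>\<infinity>j\<in>J. (norm (L j f))\<^sup>2) \<le> B * (norm f)\<^sup>2))"

definition g_frame_bounds ::
  "'a::{real_inner,complete_space} set \<Rightarrow> ('i \<Rightarrow> 'a \<Rightarrow> 'a) \<Rightarrow> 'i set \<Rightarrow> real \<Rightarrow> real \<Rightarrow> bool" where
  "g_frame_bounds W G I C D \<longleftrightarrow>
     0 < C \<and> C \<le> D \<and>
     (\<forall>g\<in>W. (\<lambda>i. (norm (G i g))\<^sup>2) summable_on I \<and>
             C * (norm g)\<^sup>2 \<le> (\<Sum>\<^sub>\<infinity>i\<in>I. (norm (G i g))\<^sup>2) \<and>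
             (\<Sum>\<^sub>\<infinity>i\<in>I. (norm (G i g))\<^sup>2) \<le> D * (norm g)\<^sup>2)"

end

theory Submission
  imports Defs
begin

theorem mainTheorem3:
  fixes K :: "'a::{real_inner,complete_space} \<Rightarrow> 'a"
    and J :: "int set"
    and HH :: "int \<Rightarrow> 'a set"
    and Lam :: "int \<Rightarrow> 'a \<Rightarrow> 'a"
    and I :: "int \<Rightarrow> nat set"
    and HHs :: "int \<Rightarrow> nat \<Rightarrow> 'a set"
    and Gam :: "int \<Rightarrow> nat \<Rightarrow> 'a \<Rightarrow> 'a"
    and Cb Db :: "int \<Rightarrow> real"
  assumes separable: "\<exists>D::'a set. countable D \<and> closure D = UNIV"
    and K_bl: "bounded_linear K"
    and HH_cs: "\<And>j. j \<in> J \<Longrightarrow> closed_subspace (HH j)"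
    and Lam_bl: "\<And>j. j \<in> J \<Longrightarrow> bounded_linear (Lam j)"
    and Lam_range: "\<And>j. j \<in> J \<Longrightarrow> range (Lam j) \<subseteq> HH j"
    and HHs_cs: "\<And>j i. j \<in> J \<Longrightarrow> i \<in> I j \<Longrightarrow> closed_subspace (HHs j i) \<and> HHs j i \<subseteq> HH j"
    and Gam_bl: "\<And>j i. j \<in> J \<Longrightarrow> i \<in> I j \<Longrightarrow> bounded_linear_on (HH j) (Gam j i)"
    and Gam_range: "\<And>j i. j \<in> J \<Longrightarrow> i \<in> I j \<Longrightarrow> Gam j i ` HH j \<subseteq> HHs j i"
    and Gam_frame: "\<And>j. j \<in> J \<Longrightarrow> g_frame_bounds (HH j) (Gam j) (I j) (Cb j) (Db j)"
    and C_pos: "\<exists>c>0. \<forall>j\<in>J. c \<le> Cb j"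
    and D_fin: "bdd_above (Db ` J)"
  shows "K_g_frame K Lam J \<longleftrightarrow>
         K_g_frame K (\<lambda>(j, i). Gam j i \<circ> Lam j) (SIGMA j:J. I j)"
proof -
  obtain c where c: "c > 0" "\<And>j. j \<in> J \<Longrightarrow> c \<le> Cb j" using C_pos by blast
  obtain Dm where Dm: "\<And>j. j \<in> J \<Longrightarrow> Db j \<le> Dm" using D_fin by (auto simp: bdd_above_def)
  define D where "D = max Dm c"
  have D: "D > 0" "\<And>j. j \<in> J \<Longrightarrow> Db j \<le> D" using c Dm by (force simp: D_def max_def)+
  define a where "a f j = (norm (Lam j f))\<^sup>2" for f j
  define s where "s f j = (\<Sum>\<^sub>\<infinity>i\<in>I j. (norm (Gam j i (Lam j f)))\<^sup>2)" for f j
  have eqF: "(\<lambda>p. (norm ((case p of (j, i) \<Rightarrow> Gam j i \<circ> Lam j) f))\<^sup>2)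
        = (\<lambda>(j,i). (norm (Gam j i (Lam j f)))\<^sup>2)" for f
    by (auto simp: fun_eq_iff split: prod.splits)
  have pt: "(\<lambda>i. (norm (Gam j i (Lam j f)))\<^sup>2) summable_on I j \<and> c * a f j \<le> s f j \<and> s f j \<le> D * a f j"
    if j: "j \<in> J" for f j
  proof -
    have "Lam j f \<in> HH j" using Lam_range[OF j] by auto
    then have h: "(\<lambda>i. (norm (Gam j i (Lam j f)))\<^sup>2) summable_on I j \<and>
        Cb j * a f j \<le> s f j \<and> s f j \<le> Db j * a f j"
      using Gam_frame[OF j] unfolding g_frame_bounds_def a_def s_def by blast
    have "c * a f j \<le> Cb j * a f j" using c(2)[OF j] by (intro mult_right_mono) (auto simp: a_def)
    moreover have "Db j * a f j \<le> D * a f j" using D(2)[OF j] by (intro mult_right_mono) (auto simp: a_def)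
    ultimately show ?thesis using h by linarith
  qed
  have anonneg: "a f j \<ge> 0" for f j by (simp add: a_def)
  have snonneg: "s f j \<ge> 0" for f j unfolding s_def by (intro infsum_nonneg) auto
  have sigma: "(\<lambda>(j,i). (norm (Gam j i (Lam j f)))\<^sup>2) summable_on (SIGMA j:J. I j)
      \<longleftrightarrow> s f summable_on J" for f
  proof
    assume H: "(\<lambda>(j,i). (norm (Gam j i (Lam j f)))\<^sup>2) summable_on (SIGMA j:J. I j)"
    show "s f summable_on J" unfolding s_def
      using summable_on_SigmaD[OF H] pt by auto
  next
    assume H: "s f summable_on J"
    show "(\<lambda>(j,i). (norm (Gam j i (Lam j f)))\<^sup>2) summable_on (SIGMA j:J. I j)"
      by (rule summable_on_SigmaI[where g="s f"]) (use H pt in \<open>auto simp: s_def\<close>)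
  qed
  have sigsum: "(\<Sum>\<^sub>\<infinity>p\<in>(SIGMA j:J. I j). (\<lambda>(j,i). (norm (Gam j i (Lam j f)))\<^sup>2) p) = infsum (s f) J"
    if "(\<lambda>(j,i). (norm (Gam j i (Lam j f)))\<^sup>2) summable_on (SIGMA j:J. I j)" for f
    using infsum_Sigma'_banach[OF that] unfolding s_def by simp
  show ?thesis
  proof
    assume "K_g_frame K Lam J"
    then obtain A B where AB: "0 < A" "A \<le> B" and
      fr: "\<And>f. a f summable_on J \<and> A * (norm (adjoint K f))\<^sup>2 \<le> infsum (a f) J \<and> infsum (a f) J \<le> B * (norm f)\<^sup>2"
      unfolding K_g_frame_def a_def by blast
    show "K_g_frame K (\<lambda>(j, i). Gam j i \<circ> Lam j) (SIGMA j:J. I j)"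
      unfolding K_g_frame_def eqF
    proof (rule exI[of _ "c * A"], rule exI[of _ "max (c*A) (D * B)"], intro conjI allI)
      show "0 < c * A" using c AB by simp
      show "c * A \<le> max (c*A) (D * B)" by simp
      fix f
      have sa: "(\<lambda>j. D * a f j) summable_on J" using fr by (intro summable_on_cmult_right) auto
      have ss: "s f summable_on J"
        by (rule summable_on_comparison_test[OF sa]) (use pt snonneg in auto)
      show S: "(\<lambda>(j,i). (norm (Gam j i (Lam j f)))\<^sup>2) summable_on (SIGMA j:J. I j)"
        using sigma ss by blast
      have "c * A * (norm (adjoint K f))\<^sup>2 \<le> c * infsum (a f) J"
        using fr[of f] c by (simp add: mult.assoc)
      also have "\<dots> = infsum (\<lambda>j. c * a f j) J" by (simp add: infsum_cmult_right')
      also have "\<dots> \<le> infsum (s f) J"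
        by (rule infsum_mono) (use fr ss pt in \<open>auto intro: summable_on_cmult_right\<close>)
      finally show "c * A * (norm (adjoint K f))\<^sup>2
         \<le> (\<Sum>\<^sub>\<infinity>p\<in>(SIGMA j:J. I j). (\<lambda>(j,i). (norm (Gam j i (Lam j f)))\<^sup>2) p)"
        using sigsum[OF S] by simp
      have "infsum (s f) J \<le> infsum (\<lambda>j. D * a f j) J"
        by (rule infsum_mono) (use sa ss pt in auto)
      also have "\<dots> = D * infsum (a f) J" by (simp add: infsum_cmult_right')
      also have "\<dots> \<le> D * (B * (norm f)\<^sup>2)" using fr[of f] D by simp
      also have "\<dots> \<le> max (c*A) (D * B) * (norm f)\<^sup>2"
        by (simp add: mult.assoc[symmetric] mult_right_mono)
      finally show "(\<Sum>\<^sub>\<infinity>p\<in>(SIGMA j:J. I j). (\<lambda>(j,i). (norm (Gam j i (Lam j f)))\<^sup>2) p)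
         \<le> max (c*A) (D * B) * (norm f)\<^sup>2"
        using sigsum[OF S] by simp
    qed
  next
    assume "K_g_frame K (\<lambda>(j, i). Gam j i \<circ> Lam j) (SIGMA j:J. I j)"
    then obtain A B where AB: "0 < A" "A \<le> B" and
      fr: "\<And>f. (\<lambda>(j,i). (norm (Gam j i (Lam j f)))\<^sup>2) summable_on (SIGMA j:J. I j) \<and>
         A * (norm (adjoint K f))\<^sup>2 \<le> (\<Sum>\<^sub>\<infinity>p\<in>(SIGMA j:J. I j). (\<lambda>(j,i). (norm (Gam j i (Lam j f)))\<^sup>2) p) \<and>
         (\<Sum>\<^sub>\<infinity>p\<in>(SIGMA j:J. I j). (\<lambda>(j,i). (norm (Gam j i (Lam j f)))\<^sup>2) p) \<le> B * (norm f)\<^sup>2"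
      unfolding K_g_frame_def eqF by blast
    have fr2: "s f summable_on J \<and> A * (norm (adjoint K f))\<^sup>2 \<le> infsum (s f) J \<and> infsum (s f) J \<le> B * (norm f)\<^sup>2" for f
      using fr[of f] sigma[of f] sigsum[of f] by simp
    show "K_g_frame K Lam J"
      unfolding K_g_frame_def a_def[symmetric]
    proof (rule exI[of _ "A / D"], rule exI[of _ "max (A/D) (B / c)"], intro conjI allI)
      show "0 < A / D" using D AB by simp
      show "A / D \<le> max (A/D) (B / c)" by simp
      fix f
      have sa: "(\<lambda>j. (1/c) * s f j) summable_on J" using fr2 by (intro summable_on_cmult_right) auto
      have le1: "a f j \<le> (1/c) * s f j" if "j \<in> J" for j
        using pt[OF that, of f] c by (simp add: field_simps)
      have le2: "(1/D) * s f j \<le> a f j" if "j \<in> J" for j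
        using pt[OF that, of f] D by (simp add: field_simps)
      show as: "a f summable_on J"
        by (rule summable_on_comparison_test[OF sa]) (use le1 anonneg in auto)
      have "A / D * (norm (adjoint K f))\<^sup>2 \<le> (1/D) * infsum (s f) J"
        using fr2[of f] D by (simp add: field_simps)
      also have "\<dots> = infsum (\<lambda>j. (1/D) * s f j) J" by (rule infsum_cmult_right'[symmetric])
      also have "\<dots> \<le> infsum (a f) J"
        using fr2[of f] by (intro infsum_mono[OF summable_on_cmult_right as le2]) auto
      finally show "A / D * (norm (adjoint K f))\<^sup>2 \<le> infsum (a f) J" .
      have "infsum (a f) J \<le> infsum (\<lambda>j. (1/c) * s f j) J"
        by (rule infsum_mono) (use sa as le1 in auto)
      also have "\<dots> = (1/c) * infsum (s f) J" by (rule infsum_cmult_right')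
      also have "\<dots> \<le> (1/c) * (B * (norm f)\<^sup>2)" using fr2[of f] c by (intro mult_left_mono) auto
      also have "\<dots> \<le> max (A/D) (B / c) * (norm f)\<^sup>2"
        proof -
          have "(1/c) * (B * (norm f)\<^sup>2) = (B / c) * (norm f)\<^sup>2" by simp
          also have "\<dots> \<le> max (A/D) (B / c) * (norm f)\<^sup>2" by (intro mult_right_mono) auto
          finally show ?thesis .
        qed
      finally show "infsum (a f) J \<le> max (A/D) (B / c) * (norm f)\<^sup>2" .
    qed
  qed
qed

end
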